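(* Let $H\in(\frac12,1)$, $\theta>0$, let $B$ be a fractional Brownian motion with Hurst index $H$, let $\xi_t=\int_0^t e^{-\theta s}\,dB_s$ (continuous version), $\xi_\infty=\int_0^\infty e^{-\theta r}\,dB_r$, and $X_t=e^{\theta t}\xi_t$ (the solution of $X_0=0$, $dX_t=\theta X_tdt+dB_t$). Then, as $t\to\infty$, $$e^{-2\theta t}\int_0^t X_s^2\,ds=e^{-2\theta t}\int_0^t e^{2\theta s}\xi_s^2\,ds\longrightarrow\frac{\xi_\infty^2}{2\theta}\quad\text{almost surely.}$$
   Context: A fractional Brownian motion with Hurst index $H$ is a centered Gaussian process $(B_t)_{t\ge0}$, $B_0=0$, with covariance $E(B_tB_s)=\frac12(t^{2H}+s^{2H}-|t-s|^{2H})$. The integrals of the deterministic function $e^{-\theta s}$ against $B$ are Wiener (equivalently, on finite intervals, Young) integrals; $\xi_\infty$ is the $L^2$ and almost sure limit of $\xi_t$. *)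

theory Defs
  imports "HOL-Probability.Probability"
begin

definition normal_rv :: "'a measure \<Rightarrow> ('a \<Rightarrow> real) \<Rightarrow> bool" where
  "normal_rv M X \<longleftrightarrow> X \<in> borel_measurable M \<and>
     ((\<exists>\<mu> \<sigma>. \<sigma> > 0 \<and> distributed M lborel X (normal_density \<mu> \<sigma>)) \<or>
      (\<exists>c. AE \<omega> in M. X \<omega> = c))"

definition fBm :: "'a measure \<Rightarrow> real \<Rightarrow> (real \<Rightarrow> 'a \<Rightarrow> real) \<Rightarrow> bool" where
  "fBm M H B \<longleftrightarrow> prob_space M \<and>
     (\<forall>t\<ge>0. B t \<in> borel_measurable M) \<and>
     (AE \<omega> in M. B 0 \<omega> = 0) \<and>
     (\<forall>I c. finite I \<longrightarrow> I \<subseteq> {0..} \<longrightarrow> normal_rv M (\<lambda>\<omega>. \<Sum>t\<in>I. c t * B t \<omega>)) \<and>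
     (\<forall>t\<ge>0. integrable M (B t) \<and> integral\<^sup>L M (B t) = 0) \<and>
     (\<forall>s\<ge>0. \<forall>t\<ge>0. integral\<^sup>L M (\<lambda>\<omega>. B t \<omega> * B s \<omega>) =
        (t powr (2*H) + s powr (2*H) - \<bar>t - s\<bar> powr (2*H)) / 2)"

definition has_RS_integral :: "(real \<Rightarrow> real) \<Rightarrow> (real \<Rightarrow> real) \<Rightarrow> real \<Rightarrow> real \<Rightarrow> real \<Rightarrow> bool" where
  "has_RS_integral f g a b I \<longleftrightarrow>
     (\<forall>\<epsilon>>0. \<exists>\<delta>>0. \<forall>(n::nat) (p::nat \<Rightarrow> real) (\<tau>::nat \<Rightarrow> real).
        p 0 = a \<and> p n = b \<and> (\<forall>i<n. p i \<le> \<tau> i \<and> \<tau> i \<le> p (Suc i) \<and> p (Suc i) - p i < \<delta>)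
        \<longrightarrow> \<bar>(\<Sum>i<n. f (\<tau> i) * (g (p (Suc i)) - g (p i))) - I\<bar> < \<epsilon>)"

definition RS_integral :: "(real \<Rightarrow> real) \<Rightarrow> (real \<Rightarrow> real) \<Rightarrow> real \<Rightarrow> real \<Rightarrow> real" where
  "RS_integral f g a b = (THE I. has_RS_integral f g a b I)"

definition xi :: "real \<Rightarrow> (real \<Rightarrow> 'a \<Rightarrow> real) \<Rightarrow> real \<Rightarrow> 'a \<Rightarrow> real" where
  "xi \<theta> B t \<omega> = RS_integral (\<lambda>s. exp (- \<theta> * s)) (\<lambda>s. B s \<omega>) 0 t"

end

theory Submission
  imports Defs
begin


lemma exp_lip:
  fixes \<theta> a b :: real
  assumes "\<theta> \<ge> 0" "0 \<le> a" "0 \<le> b"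
  shows "\<bar>exp (-\<theta>*a) - exp (-\<theta>*b)\<bar> \<le> \<theta> * \<bar>a - b\<bar>"
proof -
  have key: "\<bar>exp (-\<theta>*a) - exp (-\<theta>*b)\<bar> \<le> \<theta> * (b - a)" if "0 \<le> a" "a \<le> b" for a b
  proof -
    have "exp (-\<theta>*b) = exp (-\<theta>*a) * exp (-(\<theta>*(b-a)))" by (simp add: exp_add[symmetric] algebra_simps)
    moreover have "exp (-(\<theta>*(b-a))) \<ge> 1 - \<theta>*(b-a)" using exp_ge_add_one_self[of "-(\<theta>*(b-a))"] by simp
    moreover have "exp (-(\<theta>*(b-a))) \<le> 1" using assms that by (simp add: mult_nonneg_nonneg)
    moreover have "exp (-\<theta>*a) \<le> 1" using assms that by (simp add: mult_nonneg_nonneg)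
    moreover have "\<theta>*(b-a) \<ge> 0" using assms that by simp
    ultimately have eq: "exp (-\<theta>*a) - exp (-\<theta>*b) = exp (-\<theta>*a) * (1 - exp (-(\<theta>*(b-a))))"
      and r: "0 \<le> 1 - exp (-(\<theta>*(b-a)))" "1 - exp (-(\<theta>*(b-a))) \<le> \<theta>*(b-a)"
      by (simp_all add: algebra_simps)
    have "exp (-\<theta>*a) * (1 - exp (-(\<theta>*(b-a)))) \<le> 1 * (\<theta>*(b-a))"
      using r \<open>exp (-\<theta>*a) \<le> 1\<close> by (intro mult_mono) auto
    moreover have "0 \<le> exp (-\<theta>*a) * (1 - exp (-(\<theta>*(b-a))))" using r by simp
    ultimately show ?thesis using eq by simp
  qed
  show ?thesis
  proof (cases "a \<le> b")
    case True thus ?thesis using key[of a b] assms by simp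
  next
    case False thus ?thesis using key[of b a] assms by (simp add: abs_minus_commute)
  qed
qed

lemma part_mono:
  fixes p :: "nat \<Rightarrow> real"
  assumes "\<forall>i<n. p i \<le> p (Suc i)" "i \<le> j" "j \<le> n"
  shows "p i \<le> p j"
  using assms(2,3)
proof (induction j rule: dec_induct)
  case base then show ?case by simp
next
  case (step k)
  then have "p k \<le> p (Suc k)" using assms(1) by simp
  with step show ?case by simp
qed

lemma RS_has:
  fixes g :: "real \<Rightarrow> real" and \<theta> t :: real
  assumes \<theta>: "\<theta> > 0" and t: "t \<ge> 0" and g: "continuous_on {0..t} g"
  shows "has_RS_integral (\<lambda>s. exp (- \<theta> * s)) g 0 t
     (exp (-\<theta>*t) * g t - g 0 - integral {0..t} (\<lambda>s. g s * (- \<theta> * exp (- \<theta> * s))))"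
  unfolding has_RS_integral_def
proof (intro allI impI)
  fix \<epsilon> :: real assume \<epsilon>: "\<epsilon> > 0"
  define f where "f = (\<lambda>s. exp (- \<theta> * s))"
  define h where "h = (\<lambda>s. g s * (- \<theta> * exp (- \<theta> * s)))"
  define G where "G = (\<lambda>x. integral {0..x} h)"
  define \<eta> where "\<eta> = \<epsilon> / (2*\<theta>*(t+1))"
  have \<eta>: "\<eta> > 0" using \<epsilon> \<theta> t by (simp add: \<eta>_def)
  have hc: "continuous_on {0..t} h" unfolding h_def
    by (intro continuous_intros g)
  have uc: "uniformly_continuous_on {0..t} g"
    by (rule compact_uniformly_continuous[OF g compact_Icc])
  obtain \<delta> where \<delta>: "\<delta> > 0" and \<delta>g: "\<And>x y. x \<in> {0..t} \<Longrightarrow> y \<in> {0..t} \<Longrightarrow> \<bar>x - y\<bar> < \<delta> \<Longrightarrow> \<bar>g x - g y\<bar> < \<eta>"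
    using uc \<eta> unfolding uniformly_continuous_on_def dist_real_def by metis
  have Gd: "(G has_field_derivative h z) (at z within {0..t})" if "z \<in> {0..t}" for z
    using integral_has_vector_derivative[OF hc that] unfolding G_def
    by (simp add: has_real_derivative_iff_has_vector_derivative)
  show "\<exists>\<delta>>0. \<forall>n p \<tau>. p 0 = 0 \<and> p n = t \<and> (\<forall>i<n. p i \<le> \<tau> i \<and> \<tau> i \<le> p (Suc i) \<and> p (Suc i) - p i < \<delta>) \<longrightarrow>
           \<bar>(\<Sum>i<n. exp (- \<theta> * \<tau> i) * (g (p (Suc i)) - g (p i))) -
            (exp (- \<theta> * t) * g t - g 0 - integral {0..t} (\<lambda>s. g s * (- \<theta> * exp (- \<theta> * s))))\<bar> < \<epsilon>"
  proof (intro exI[of _ \<delta>] conjI allI impI \<delta>)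
    fix n and p \<tau> :: "nat \<Rightarrow> real"
    assume H: "p 0 = 0 \<and> p n = t \<and> (\<forall>i<n. p i \<le> \<tau> i \<and> \<tau> i \<le> p (Suc i) \<and> p (Suc i) - p i < \<delta>)"
    have mono: "\<forall>i<n. p i \<le> p (Suc i)" using H by force
    have pin: "p i \<in> {0..t}" if "i \<le> n" for i
      using part_mono[OF mono, of 0 i] part_mono[OF mono, of i n] that H by auto
    define T where "T = (\<lambda>i. (f (\<tau> i) - f (p (Suc i))) * (g (p (Suc i)) - g (p i))
        + (G (p (Suc i)) - G (p i) - g (p i) * (f (p (Suc i)) - f (p i))))"
    define F where "F = (\<lambda>i. f (p i) * g (p i) - G (p i))"
    have tele: "(\<Sum>i<n. F (Suc i) - F i) = F n - F 0" by (rule sum_lessThan_telescope)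
    have G0: "G 0 = 0" unfolding G_def by simp
    have FF: "F n - F 0 = exp (- \<theta> * t) * g t - g 0 - integral {0..t} (\<lambda>s. g s * (- \<theta> * exp (- \<theta> * s)))"
      using H G0 by (simp add: F_def f_def G_def h_def)
    have TT: "(\<Sum>i<n. T i) = (\<Sum>i<n. exp (- \<theta> * \<tau> i) * (g (p (Suc i)) - g (p i))) - (\<Sum>i<n. F (Suc i) - F i)"
      unfolding sum_subtractf[symmetric] by (rule sum.cong) (simp_all add: T_def F_def f_def algebra_simps)
    have eq: "(\<Sum>i<n. exp (- \<theta> * \<tau> i) * (g (p (Suc i)) - g (p i))) -
            (exp (- \<theta> * t) * g t - g 0 - integral {0..t} (\<lambda>s. g s * (- \<theta> * exp (- \<theta> * s))))
          = (\<Sum>i<n. T i)"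
      using TT tele FF by simp
    have Tb: "\<bar>T i\<bar> \<le> 2*\<theta>*\<eta>*(p (Suc i) - p i)" if i: "i < n" for i
    proof -
      have p0: "p i \<in> {0..t}" and p1: "p (Suc i) \<in> {0..t}" using pin i by auto
      have Hi: "p i \<le> \<tau> i" "\<tau> i \<le> p (Suc i)" "p (Suc i) - p i < \<delta>" using H i by auto
      have b1: "\<bar>f (\<tau> i) - f (p (Suc i))\<bar> \<le> \<theta> * (p (Suc i) - p i)"
      proof -
        have "\<bar>f (\<tau> i) - f (p (Suc i))\<bar> \<le> \<theta> * \<bar>\<tau> i - p (Suc i)\<bar>"
          unfolding f_def by (rule exp_lip) (use \<theta> p0 p1 Hi in auto)
        also have "\<dots> \<le> \<theta> * (p (Suc i) - p i)" using Hi \<theta> by (intro mult_left_mono) auto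
        finally show ?thesis .
      qed
      have b2: "\<bar>g (p (Suc i)) - g (p i)\<bar> \<le> \<eta>"
        using \<delta>g[OF p1 p0] Hi by auto
      have b12: "\<bar>(f (\<tau> i) - f (p (Suc i))) * (g (p (Suc i)) - g (p i))\<bar> \<le> \<theta> * (p (Suc i) - p i) * \<eta>"
        unfolding abs_mult by (rule mult_mono[OF b1 b2]) (use \<theta> Hi in auto)
      define \<phi> where "\<phi> = (\<lambda>s. G s - g (p i) * f s)"
      have sub: "{p i..p (Suc i)} \<subseteq> {0..t}" using p0 p1 by auto
      have \<phi>d: "(\<phi> has_field_derivative (h z - g (p i) * (- \<theta> * exp (- \<theta> * z)))) (at z within {p i..p (Suc i)})"
        if "z \<in> {p i..p (Suc i)}" for z
      proof -
        have "(\<phi> has_field_derivative (h z - g (p i) * (- \<theta> * exp (- \<theta> * z)))) (at z within {0..t})"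
        proof -
          have zt: "z \<in> {0..t}" using that sub by auto
          have d2: "((\<lambda>s. g (p i) * exp (- \<theta> * s)) has_field_derivative g (p i) * (- \<theta> * exp (- \<theta> * z))) (at z within {0..t})"
            by (auto intro!: derivative_eq_intros)
          show ?thesis unfolding \<phi>_def f_def using DERIV_diff[OF Gd[OF zt] d2] by simp
        qed
        thus ?thesis using sub by (rule DERIV_subset)
      qed
      have \<phi>b: "norm (h z - g (p i) * (- \<theta> * exp (- \<theta> * z))) \<le> \<eta> * \<theta>"
        if z: "z \<in> {p i..p (Suc i)}" for z
      proof -
        have zt: "z \<in> {0..t}" using z sub by auto
        have "\<bar>g z - g (p i)\<bar> < \<eta>" using \<delta>g[OF zt p0] z Hi by auto
        moreover have "exp (- \<theta> * z) \<le> 1" using \<theta> zt by simp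
        moreover have "h z - g (p i) * (- \<theta> * exp (- \<theta> * z)) = - (g z - g (p i)) * \<theta> * exp (- \<theta> * z)"
          by (simp add: h_def algebra_simps)
        ultimately have "\<bar>h z - g (p i) * (- \<theta> * exp (- \<theta> * z))\<bar> = \<bar>g z - g (p i)\<bar> * \<theta> * exp (- \<theta> * z)"
          using \<theta> by (simp add: abs_mult)
        also have "\<dots> \<le> \<eta> * \<theta> * 1"
          using \<open>\<bar>g z - g (p i)\<bar> < \<eta>\<close> \<open>exp (- \<theta> * z) \<le> 1\<close> \<theta>
          by (intro mult_mono) auto
        finally show ?thesis by simp
      qed
      have "norm (\<phi> (p (Suc i)) - \<phi> (p i)) \<le> \<eta> * \<theta> * norm (p (Suc i) - p i)"
        by (rule field_differentiable_bound[OF convex_real_interval(5) \<phi>d \<phi>b]) (use Hi in auto)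
      hence b3: "\<bar>G (p (Suc i)) - G (p i) - g (p i) * (f (p (Suc i)) - f (p i))\<bar> \<le> \<eta> * \<theta> * (p (Suc i) - p i)"
        using Hi by (simp add: \<phi>_def algebra_simps)
      have "\<bar>T i\<bar> \<le> \<theta> * (p (Suc i) - p i) * \<eta> + \<eta> * \<theta> * (p (Suc i) - p i)"
        unfolding T_def using b12 b3 by linarith
      thus ?thesis by (simp add: algebra_simps)
    qed
    have "\<bar>\<Sum>i<n. T i\<bar> \<le> (\<Sum>i<n. 2*\<theta>*\<eta>*(p (Suc i) - p i))"
      by (rule order_trans[OF sum_abs]) (intro sum_mono Tb, simp)
    also have "\<dots> = 2*\<theta>*\<eta>*(p n - p 0)"
      by (simp add: sum_distrib_left[symmetric] sum_lessThan_telescope)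
    also have "\<dots> = 2*\<theta>*\<eta>*t" using H by simp
    also have "\<dots> = \<epsilon> * (t/(t+1))"
    proof -
      have "t + 1 \<noteq> 0" using t by simp
      thus ?thesis using \<theta> t by (simp add: \<eta>_def divide_simps)
    qed
    also have "\<dots> < \<epsilon> * 1" using \<epsilon> t by (intro mult_strict_left_mono) auto
    also have "\<dots> = \<epsilon>" by simp
    finally show "\<bar>(\<Sum>i<n. exp (- \<theta> * \<tau> i) * (g (p (Suc i)) - g (p i))) -
            (exp (- \<theta> * t) * g t - g 0 - integral {0..t} (\<lambda>s. g s * (- \<theta> * exp (- \<theta> * s))))\<bar> < \<epsilon>"
      using eq by simp
  qed
qed

lemma RS_unique:
  assumes t: "t \<ge> 0" and I: "has_RS_integral f g 0 t I" and J: "has_RS_integral f g 0 t J"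
  shows "I = J"
proof (rule ccontr)
  assume ne: "I \<noteq> J"
  define \<epsilon> where "\<epsilon> = \<bar>I - J\<bar> / 2"
  have \<epsilon>: "\<epsilon> > 0" using ne by (simp add: \<epsilon>_def)
  obtain \<delta>1 where d1: "\<delta>1 > 0" and D1: "\<And>n p \<tau>. p 0 = 0 \<and> p n = t \<and> (\<forall>i<n. p i \<le> \<tau> i \<and> \<tau> i \<le> p (Suc i) \<and> p (Suc i) - p i < \<delta>1)
        \<Longrightarrow> \<bar>(\<Sum>i<n. f (\<tau> i) * (g (p (Suc i)) - g (p i))) - I\<bar> < \<epsilon>"
    using I \<epsilon> unfolding has_RS_integral_def by meson
  obtain \<delta>2 where d2: "\<delta>2 > 0" and D2: "\<And>n p \<tau>. p 0 = 0 \<and> p n = t \<and> (\<forall>i<n. p i \<le> \<tau> i \<and> \<tau> i \<le> p (Suc i) \<and> p (Suc i) - p i < \<delta>2)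
        \<Longrightarrow> \<bar>(\<Sum>i<n. f (\<tau> i) * (g (p (Suc i)) - g (p i))) - J\<bar> < \<epsilon>"
    using J \<epsilon> unfolding has_RS_integral_def by meson
  define \<delta> where "\<delta> = min \<delta>1 \<delta>2"
  have \<delta>: "\<delta> > 0" using d1 d2 by (simp add: \<delta>_def)
  obtain m :: nat where m: "t / \<delta> < real m" using reals_Archimedean2 by blast
  define N where "N = Suc m"
  have N: "real N > 0" "t / real N < \<delta>"
  proof -
    show "real N > 0" by (simp add: N_def)
    have "t < real m * \<delta>" using m \<delta> by (simp add: divide_less_eq)
    also have "\<dots> \<le> real N * \<delta>" using \<delta> by (simp add: N_def)
    finally show "t / real N < \<delta>" using \<open>real N > 0\<close> by (simp add: divide_less_eq mult.commute)
  qed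
  define p where "p = (\<lambda>i::nat. real i * t / real N)"
  have cond: "p 0 = 0 \<and> p N = t \<and> (\<forall>i<N. p i \<le> p i \<and> p i \<le> p (Suc i) \<and> p (Suc i) - p i < \<delta>)"
  proof -
    have d: "p (Suc i) - p i = t / real N" for i by (simp add: p_def algebra_simps add_divide_distrib)
    have nn: "t / real N \<ge> 0" using t by simp
    have "p 0 = 0" by (simp add: p_def)
    moreover have "p N = t" using N by (simp add: p_def)
    moreover have "\<forall>i<N. p i \<le> p i \<and> p i \<le> p (Suc i) \<and> p (Suc i) - p i < \<delta>"
      using d nn N(2) by (metis diff_ge_0_iff_ge order_refl)
    ultimately show ?thesis by blast
  qed
  have "\<bar>(\<Sum>i<N. f (p i) * (g (p (Suc i)) - g (p i))) - I\<bar> < \<epsilon>"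
    by (rule D1) (use cond in \<open>auto simp: \<delta>_def\<close>)
  moreover have "\<bar>(\<Sum>i<N. f (p i) * (g (p (Suc i)) - g (p i))) - J\<bar> < \<epsilon>"
    by (rule D2) (use cond in \<open>auto simp: \<delta>_def\<close>)
  moreover have "\<bar>I - J\<bar> \<le> \<bar>S - I\<bar> + \<bar>S - J\<bar>" if "S = (\<Sum>i<N. f (p i) * (g (p (Suc i)) - g (p i)))" for S :: real by arith
  ultimately show False unfolding \<epsilon>_def by fastforce
qed

lemma xi_eq:
  fixes B :: "real \<Rightarrow> 'a \<Rightarrow> real"
  assumes \<theta>: "\<theta> > 0" and t: "t \<ge> 0" and c: "continuous_on {0..t} (\<lambda>s. B s \<omega>)"
  shows "xi \<theta> B t \<omega> = exp (-\<theta>*t) * B t \<omega> - B 0 \<omega> - integral {0..t} (\<lambda>s. B s \<omega> * (- \<theta> * exp (- \<theta> * s)))"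
  unfolding xi_def RS_integral_def
proof (rule the_equality)
  show "has_RS_integral (\<lambda>s. exp (- \<theta> * s)) (\<lambda>s. B s \<omega>) 0 t (exp (-\<theta>*t) * B t \<omega> - B 0 \<omega> - integral {0..t} (\<lambda>s. B s \<omega> * (- \<theta> * exp (- \<theta> * s))))"
    by (rule RS_has[OF \<theta> t c])
  fix I assume "has_RS_integral (\<lambda>s. exp (- \<theta> * s)) (\<lambda>s. B s \<omega>) 0 t I"
  thus "I = exp (-\<theta>*t) * B t \<omega> - B 0 \<omega> - integral {0..t} (\<lambda>s. B s \<omega> * (- \<theta> * exp (- \<theta> * s)))"
    by (rule RS_unique[OF t _ RS_has[OF \<theta> t c]])
qed


lemma exp_neg_lin_zero:
  fixes c :: real assumes c: "c > 0"
  shows "((\<lambda>t. exp (- (c * t))) \<longlongrightarrow> 0) at_top"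
proof -
  have "filterlim (\<lambda>t. c * t) at_top at_top"
    using filterlim_tendsto_pos_mult_at_top[OF tendsto_const c filterlim_ident] .
  hence "filterlim (\<lambda>t. - (c * t)) at_bot at_top"
    by (simp add: filterlim_uminus_at_bot)
  thus ?thesis by (rule filterlim_compose[OF exp_at_bot])
qed

lemma exp_lin_top:
  fixes c :: real assumes c: "c > 0"
  shows "filterlim (\<lambda>t. exp (c * t)) at_top at_top"
proof -
  have "filterlim (\<lambda>t. c * t) at_top at_top"
    using filterlim_tendsto_pos_mult_at_top[OF tendsto_const c filterlim_ident] .
  thus ?thesis by (rule filterlim_compose[OF exp_at_top])
qed

lemma cauchy_fun:
  fixes G E :: "real \<Rightarrow> real"
  assumes GE: "\<And>s t. 0 \<le> s \<Longrightarrow> s \<le> t \<Longrightarrow> \<bar>G t - G s\<bar> \<le> E s"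
    and E0: "(E \<longlongrightarrow> 0) at_top"
  shows "\<exists>L. (G \<longlongrightarrow> L) at_top"
proof -
  have Es: "(\<lambda>n. E (real n)) \<longlonglongrightarrow> 0"
    using filterlim_compose[OF E0 filterlim_real_sequentially] .
  have "Cauchy (\<lambda>n. G (real n))"
  proof (rule metric_CauchyI)
    fix e :: real assume e: "e > 0"
    have "eventually (\<lambda>n. E (real n) < e) sequentially" using order_tendstoD(2)[OF Es e] .
    then obtain N where N: "\<And>n. n \<ge> N \<Longrightarrow> E (real n) < e"
      unfolding eventually_sequentially by blast
    show "\<exists>M. \<forall>m\<ge>M. \<forall>n\<ge>M. dist (G (real m)) (G (real n)) < e"
    proof (intro exI[of _ N] allI impI)
      fix m n assume mn: "m \<ge> N" "n \<ge> N"
      show "dist (G (real m)) (G (real n)) < e"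
      proof (cases "m \<le> n")
        case True
        have "\<bar>G (real n) - G (real m)\<bar> \<le> E (real m)" using GE True by simp
        thus ?thesis using N[OF mn(1)] by (simp add: dist_real_def abs_minus_commute)
      next
        case False
        have "\<bar>G (real m) - G (real n)\<bar> \<le> E (real n)" using GE False by simp
        thus ?thesis using N[OF mn(2)] by (simp add: dist_real_def)
      qed
    qed
  qed
  then obtain L where L: "(\<lambda>n. G (real n)) \<longlonglongrightarrow> L" using Cauchy_convergent_iff convergent_def by blast
  have bd: "\<bar>G t - L\<bar> \<le> E t" if t: "t \<ge> 0" for t
  proof -
    have "(\<lambda>n. \<bar>G (real n) - G t\<bar>) \<longlonglongrightarrow> \<bar>L - G t\<bar>"
      by (intro tendsto_intros L)
    moreover have "\<exists>N. \<forall>n\<ge>N. \<bar>G (real n) - G t\<bar> \<le> E t"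
    proof -
      obtain N :: nat where "t \<le> real N" using real_arch_simple by blast
      thus ?thesis using GE[OF t] by (intro exI[of _ N]) (auto)
    qed
    ultimately have "\<bar>L - G t\<bar> \<le> E t" by (rule LIMSEQ_le_const2)
    thus ?thesis by (simp add: abs_minus_commute)
  qed
  have "((\<lambda>t. G t - L) \<longlongrightarrow> 0) at_top"
  proof (rule Lim_null_comparison[OF _ E0])
    show "\<forall>\<^sub>F t in at_top. norm (G t - L) \<le> E t"
      by (rule eventually_mono[OF eventually_ge_at_top[of 0]]) (use bd in simp)
  qed
  hence "(G \<longlongrightarrow> L) at_top" by (simp add: LIM_zero_iff)
  thus ?thesis by blast
qed


lemma det_main:
  fixes g x :: "real \<Rightarrow> real" and \<theta> C :: real
  assumes \<theta>: "\<theta> > 0" and gc: "continuous_on {0..} g"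
    and Cb: "\<And>s. s \<ge> 0 \<Longrightarrow> \<bar>g s\<bar> \<le> C * exp (\<theta> * s / 2)"
    and xe: "\<And>t. t \<ge> 0 \<Longrightarrow> x t = exp (-\<theta>*t) * g t - integral {0..t} (\<lambda>s. g s * (- \<theta> * exp (- \<theta> * s)))"
  shows "\<exists>L::real. (x \<longlongrightarrow> L) at_top \<and>
           ((\<lambda>t. exp (- 2 * \<theta> * t) * (LBINT s=0..t. (exp (\<theta> * s) * x s)\<^sup>2)) \<longlongrightarrow> L\<^sup>2 / (2 * \<theta>)) at_top"
proof -
  define h where "h = (\<lambda>s. g s * (- \<theta> * exp (- \<theta> * s)))"
  define G where "G = (\<lambda>t. integral {0..t} h)"
  have "\<bar>g 0\<bar> \<le> C" using Cb[of 0] by simp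
  hence C0: "C \<ge> 0" by (meson abs_ge_zero order_trans)
  have gcT: "continuous_on {0..T} g" for T by (rule continuous_on_subset[OF gc]) auto
  have hcT: "continuous_on {0..T} h" for T unfolding h_def by (intro continuous_intros gcT)
  have GdT: "(G has_field_derivative h z) (at z within {0..T})" if "z \<in> {0..T}" for z T
    using integral_has_vector_derivative[OF hcT that] unfolding G_def
    by (simp add: has_real_derivative_iff_has_vector_derivative)
  have Gd: "(G has_field_derivative h z) (at z)" if "z > 0" for z
  proof -
    have i: "z \<in> interior {0..z+1}" using that by simp
    have "(G has_field_derivative h z) (at z within {0..z+1})" by (rule GdT) (use that in auto)
    thus ?thesis by (simp only: at_within_interior[OF i])
  qed
  have GcT: "continuous_on {0..T} G" for T by (rule DERIV_continuous_on[OF GdT])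
  have hb: "\<bar>h z\<bar> \<le> C * \<theta> * exp (- (\<theta>/2 * z))" if "z \<ge> 0" for z
  proof -
    have "\<bar>h z\<bar> = \<bar>g z\<bar> * (\<theta> * exp (- \<theta> * z))" using \<theta> by (simp add: h_def abs_mult)
    also have "\<dots> \<le> C * exp (\<theta> * z / 2) * (\<theta> * exp (- \<theta> * z))"
      using Cb[OF that] \<theta> by (intro mult_right_mono) auto
    also have "exp (\<theta> * z / 2) * exp (- \<theta> * z) = exp (- (\<theta>/2 * z))" by (simp add: exp_add[symmetric])
    hence "C * exp (\<theta> * z / 2) * (\<theta> * exp (- \<theta> * z)) = C * \<theta> * exp (- (\<theta>/2 * z))"
      by (metis mult.assoc mult.left_commute)
    finally show ?thesis .
  qed
  define K where "K = (\<lambda>t. - 2 * C * exp (- (\<theta>/2 * t)))"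
  have Kd: "(K has_field_derivative C * \<theta> * exp (- (\<theta>/2 * z))) (at z)" for z
    unfolding K_def by (auto intro!: derivative_eq_intros)
  have KcT: "continuous_on {0..T} K" for T unfolding K_def by (intro continuous_intros)
  have GK: "\<bar>G t - G s\<bar> \<le> 2 * C * exp (- (\<theta>/2 * s))" if st: "0 \<le> s" "s \<le> t" for s t
  proof -
    have "(\<lambda>u. G u + K u) s \<le> (\<lambda>u. G u + K u) t"
    proof (rule DERIV_nonneg_imp_increasing_open[OF st(2)])
      fix z assume z: "s < z" "z < t"
      have "DERIV (\<lambda>u. G u + K u) z :> h z + C * \<theta> * exp (- (\<theta>/2 * z))"
        using DERIV_add[OF Gd Kd[of z]] z st by simp
      moreover have "0 \<le> h z + C * \<theta> * exp (- (\<theta>/2 * z))" using hb[of z] z st by (simp add: abs_le_iff)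
      ultimately show "\<exists>y. DERIV (\<lambda>u. G u + K u) z :> y \<and> 0 \<le> y" by blast
    next
      show "continuous_on {s..t} (\<lambda>u. G u + K u)"
        by (intro continuous_on_add continuous_on_subset[OF GcT] continuous_on_subset[OF KcT]) (use st in auto)
    qed
    moreover have "(\<lambda>u. K u - G u) s \<le> (\<lambda>u. K u - G u) t"
    proof (rule DERIV_nonneg_imp_increasing_open[OF st(2)])
      fix z assume z: "s < z" "z < t"
      have "DERIV (\<lambda>u. K u - G u) z :> C * \<theta> * exp (- (\<theta>/2 * z)) - h z"
        using DERIV_diff[OF Kd[of z] Gd] z st by simp
      moreover have "0 \<le> C * \<theta> * exp (- (\<theta>/2 * z)) - h z" using hb[of z] z st by (simp add: abs_le_iff)
      ultimately show "\<exists>y. DERIV (\<lambda>u. K u - G u) z :> y \<and> 0 \<le> y" by blast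
    next
      show "continuous_on {s..t} (\<lambda>u. K u - G u)"
        by (intro continuous_on_diff continuous_on_subset[OF GcT] continuous_on_subset[OF KcT]) (use st in auto)
    qed
    moreover have "K t \<le> 0" using C0 by (simp add: K_def)
    ultimately show ?thesis using K_def by (simp add: abs_le_iff)
  qed
  have E0: "((\<lambda>s. 2 * C * exp (- (\<theta>/2 * s))) \<longlongrightarrow> 0) at_top"
    using tendsto_mult[OF tendsto_const exp_neg_lin_zero[of "\<theta>/2"]] \<theta> by simp
  obtain LG where LG: "(G \<longlongrightarrow> LG) at_top"
    using cauchy_fun[OF GK E0] by blast
  have eg0: "((\<lambda>t. exp (-\<theta>*t) * g t) \<longlongrightarrow> 0) at_top"
  proof (rule Lim_null_comparison)
    have E1: "((\<lambda>s. C * exp (- (\<theta>/2 * s))) \<longlongrightarrow> 0) at_top"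
      using tendsto_mult[OF tendsto_const exp_neg_lin_zero[of "\<theta>/2"]] \<theta> by simp
    show "((\<lambda>s. C * exp (- (\<theta>/2 * s))) \<longlongrightarrow> 0) at_top" by (rule E1)
    show "\<forall>\<^sub>F t in at_top. norm (exp (-\<theta>*t) * g t) \<le> C * exp (- (\<theta>/2 * t))"
    proof (rule eventually_mono[OF eventually_ge_at_top[of 0]])
      fix t :: real assume t: "t \<ge> 0"
      have "norm (exp (-\<theta>*t) * g t) = exp (-\<theta>*t) * \<bar>g t\<bar>" by (simp add: abs_mult)
      also have "\<dots> \<le> exp (-\<theta>*t) * (C * exp (\<theta> * t / 2))" using Cb[OF t] by simp
      also have "exp (-\<theta>*t) * exp (\<theta> * t / 2) = exp (- (\<theta>/2 * t))" by (simp add: exp_add[symmetric])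
      hence "exp (-\<theta>*t) * (C * exp (\<theta> * t / 2)) = C * exp (- (\<theta>/2 * t))" by (metis mult.left_commute)
      finally show "norm (exp (-\<theta>*t) * g t) \<le> C * exp (- (\<theta>/2 * t))" .
    qed
  qed
  define L where "L = - LG"
  have xL: "(x \<longlongrightarrow> L) at_top"
  proof -
    have "((\<lambda>t. exp (-\<theta>*t) * g t - G t) \<longlongrightarrow> 0 - LG) at_top" by (intro tendsto_diff eg0 LG)
    moreover have "\<forall>\<^sub>F t in at_top. exp (-\<theta>*t) * g t - G t = x t"
      by (rule eventually_mono[OF eventually_ge_at_top[of 0]]) (simp add: xe G_def h_def)
    ultimately show ?thesis unfolding L_def by (simp add: tendsto_cong)
  qed
  have xcT: "continuous_on {0..T} x" for T
  proof -
    have "continuous_on {0..T} (\<lambda>t. exp (-\<theta>*t) * g t - G t)"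
      by (intro continuous_intros gcT GcT)
    thus ?thesis by (rule continuous_on_cong[THEN iffD1, rotated 2]) (auto simp: xe G_def h_def)
  qed
  define \<phi> where "\<phi> = (\<lambda>s. (exp (\<theta> * s) * x s)\<^sup>2)"
  have \<phi>c: "continuous_on {0..T} \<phi>" for T unfolding \<phi>_def by (intro continuous_intros xcT)
  define N where "N = (\<lambda>t. LBINT s=0..t. \<phi> s)"
  have Nd: "(N has_field_derivative \<phi> t) (at t)" if t: "t > 0" for t
  proof -
    have i: "t \<in> interior {0..t+1}" using t by simp
    have "((\<lambda>u. LBINT y=0..u. \<phi> y) has_vector_derivative \<phi> t) (at t within {0..t+1})"
      using interval_integral_FTC2[of 0 0 "t+1" \<phi> t] \<phi>c[of "t+1"] t by (simp add: zero_ereal_def)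
    hence "((\<lambda>u. LBINT y=0..u. \<phi> y) has_vector_derivative \<phi> t) (at t)"
      by (simp only: at_within_interior[OF i])
    thus ?thesis
      by (simp add: N_def has_real_derivative_iff_has_vector_derivative)
  qed
  have lim2: "((\<lambda>t. N t / exp (2*\<theta>*t)) \<longlongrightarrow> L\<^sup>2 / (2 * \<theta>)) at_top"
  proof (rule lhospital_at_top_at_top)
    show "filterlim (\<lambda>t. exp (2*\<theta>*t)) at_top at_top" using exp_lin_top[of "2*\<theta>"] \<theta> by simp
    show "\<forall>\<^sub>F t in at_top. 2*\<theta>*exp (2*\<theta>*t) \<noteq> 0" using \<theta> by simp
    show "\<forall>\<^sub>F t in at_top. (N has_real_derivative \<phi> t) (at t)"
      by (rule eventually_mono[OF eventually_gt_at_top[of 0]]) (rule Nd)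
    show "\<forall>\<^sub>F t in at_top. ((\<lambda>t. exp (2*\<theta>*t)) has_real_derivative 2*\<theta>*exp (2*\<theta>*t)) (at t)"
      by (intro always_eventually allI) (auto intro!: derivative_eq_intros)
    have "((\<lambda>t. (x t)\<^sup>2 / (2*\<theta>)) \<longlongrightarrow> L\<^sup>2 / (2 * \<theta>)) at_top"
      using \<theta> by (intro tendsto_intros xL) simp
    moreover have "\<phi> t / (2*\<theta>*exp (2*\<theta>*t)) = (x t)\<^sup>2 / (2*\<theta>)" for t
    proof -
      have "(exp (\<theta> * t))\<^sup>2 = exp (2*\<theta>*t)" by (simp add: power2_eq_square exp_add[symmetric])
      thus ?thesis using \<theta> by (simp add: \<phi>_def power_mult_distrib)
    qed
    ultimately show "((\<lambda>t. \<phi> t / (2*\<theta>*exp (2*\<theta>*t))) \<longlongrightarrow> L\<^sup>2 / (2 * \<theta>)) at_top" by simp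
  qed
  have "exp (- 2 * \<theta> * t) * N t = N t / exp (2*\<theta>*t)" for t
    by (simp add: exp_minus divide_inverse mult.commute)
  hence "((\<lambda>t. exp (- 2 * \<theta> * t) * (LBINT s=0..t. (exp (\<theta> * s) * x s)\<^sup>2)) \<longlongrightarrow> L\<^sup>2 / (2 * \<theta>)) at_top"
    using lim2 by (simp add: N_def \<phi>_def)
  with xL show ?thesis by blast
qed



lemma fBm_prob: "fBm M H B \<Longrightarrow> prob_space M" by (simp add: fBm_def)

lemma fBm_meas: "fBm M H B \<Longrightarrow> t \<ge> 0 \<Longrightarrow> B t \<in> borel_measurable M" by (simp add: fBm_def)

lemma fBm_sq_int:
  assumes F: "fBm M H B" and t: "t \<ge> 0"
  shows "integrable M (\<lambda>\<omega>. (B t \<omega>)\<^sup>2)"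
proof -
  interpret prob_space M using fBm_prob[OF F] .
  have Bm: "B t \<in> borel_measurable M" using fBm_meas[OF F t] .
  have all: "\<forall>I c. finite I \<longrightarrow> I \<subseteq> {0..} \<longrightarrow> normal_rv M (\<lambda>\<omega>. \<Sum>t\<in>I. c t * B t \<omega>)"
    using F[unfolded fBm_def, THEN conjunct2, THEN conjunct2, THEN conjunct2, THEN conjunct1] .
  have "normal_rv M (\<lambda>\<omega>. \<Sum>u\<in>{t}. (\<lambda>_. 1::real) u * B u \<omega>)"
    using all[rule_format, of "{t}" "\<lambda>_. 1"] t by simp
  hence nr: "normal_rv M (B t)" by simp
  show ?thesis
  proof (cases "\<exists>\<mu> \<sigma>. \<sigma> > 0 \<and> distributed M lborel (B t) (normal_density \<mu> \<sigma>)")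
    case True
    then obtain \<mu> \<sigma> where \<sigma>: "\<sigma> > 0" and D: "distributed M lborel (B t) (normal_density \<mu> \<sigma>)" by blast
    have i1: "integrable lborel (\<lambda>x. normal_density \<mu> \<sigma> x * (x - \<mu>)^2)"
      by (rule integrable_normal_moment[OF \<sigma>])
    have i2: "integrable lborel (\<lambda>x. normal_density \<mu> \<sigma> x * x)"
      by (rule integrable_normal_moment_nz_1[OF \<sigma>])
    have i3: "integrable lborel (\<lambda>x. normal_density \<mu> \<sigma> x)"
      by (rule integrable_normal_density[OF \<sigma>])
    have "integrable lborel (\<lambda>x. normal_density \<mu> \<sigma> x * (x - \<mu>)^2 + (2*\<mu>) * (normal_density \<mu> \<sigma> x * x) - \<mu>\<^sup>2 * normal_density \<mu> \<sigma> x)"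
      using i1 i2 i3 by simp
    moreover have "normal_density \<mu> \<sigma> x * (x - \<mu>)^2 + (2*\<mu>) * (normal_density \<mu> \<sigma> x * x) - \<mu>\<^sup>2 * normal_density \<mu> \<sigma> x
        = normal_density \<mu> \<sigma> x * x\<^sup>2" for x
      by (simp add: power2_eq_square algebra_simps)
    ultimately have "integrable lborel (\<lambda>x. normal_density \<mu> \<sigma> x * x\<^sup>2)" by simp
    thus ?thesis using distributed_integrable[OF D, of "\<lambda>x. x\<^sup>2"] by simp
  next
    case False
    then obtain c where c: "AE \<omega> in M. B t \<omega> = c" using nr unfolding normal_rv_def by blast
    have "integrable M (\<lambda>\<omega>. c\<^sup>2)" by simp
    moreover have "AE \<omega> in M. c\<^sup>2 = (B t \<omega>)\<^sup>2" using c by auto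
    ultimately show ?thesis using integrable_cong_AE[of "\<lambda>\<omega>. c\<^sup>2" M "\<lambda>\<omega>. (B t \<omega>)\<^sup>2"] Bm by simp
  qed
qed

lemma fBm_prod_int:
  assumes F: "fBm M H B" and t: "t \<ge> 0" and s: "s \<ge> 0"
  shows "integrable M (\<lambda>\<omega>. B t \<omega> * B s \<omega>)"
proof (rule Bochner_Integration.integrable_bound)
  show "integrable M (\<lambda>\<omega>. (B t \<omega>)\<^sup>2 + (B s \<omega>)\<^sup>2)"
    by (rule Bochner_Integration.integrable_add[OF fBm_sq_int[OF F t] fBm_sq_int[OF F s]])
  show "(\<lambda>\<omega>. B t \<omega> * B s \<omega>) \<in> borel_measurable M"
    using fBm_meas[OF F t] fBm_meas[OF F s] by measurable
  show "AE \<omega> in M. norm (B t \<omega> * B s \<omega>) \<le> norm ((B t \<omega>)\<^sup>2 + (B s \<omega>)\<^sup>2)"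
  proof (intro AE_I2)
    fix \<omega>
    have "\<bar>B t \<omega> * B s \<omega>\<bar> \<le> (B t \<omega>)\<^sup>2 + (B s \<omega>)\<^sup>2"
    proof -
      have h: "2 * \<bar>B t \<omega>\<bar> * \<bar>B s \<omega>\<bar> \<le> (B t \<omega>)\<^sup>2 + (B s \<omega>)\<^sup>2"
        using sum_squares_bound[of "\<bar>B t \<omega>\<bar>" "\<bar>B s \<omega>\<bar>"] by simp
      have "0 \<le> \<bar>B t \<omega>\<bar> * \<bar>B s \<omega>\<bar>" by simp
      thus ?thesis unfolding abs_mult using h by linarith
    qed
    thus "norm (B t \<omega> * B s \<omega>) \<le> norm ((B t \<omega>)\<^sup>2 + (B s \<omega>)\<^sup>2)" by simp
  qed
qed

lemma fBm_cov:
  assumes F: "fBm M H B" and t: "t \<ge> 0" and s: "s \<ge> 0"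
  shows "integral\<^sup>L M (\<lambda>\<omega>. B t \<omega> * B s \<omega>) = (t powr (2*H) + s powr (2*H) - \<bar>t - s\<bar> powr (2*H)) / 2"
  using F t s unfolding fBm_def by blast

lemma fBm_incr:
  assumes F: "fBm M H B" and t: "t \<ge> 0" and s: "s \<ge> 0"
  shows "integrable M (\<lambda>\<omega>. (B t \<omega> - B s \<omega>)\<^sup>2)"
    and "integral\<^sup>L M (\<lambda>\<omega>. (B t \<omega> - B s \<omega>)\<^sup>2) = \<bar>t - s\<bar> powr (2*H)"
proof -
  have eq: "(\<lambda>\<omega>. (B t \<omega> - B s \<omega>)\<^sup>2) = (\<lambda>\<omega>. B t \<omega> * B t \<omega> - 2 * (B t \<omega> * B s \<omega>) + B s \<omega> * B s \<omega>)"
    by (auto simp: power2_eq_square algebra_simps)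
  have i1: "integrable M (\<lambda>\<omega>. B t \<omega> * B t \<omega>)" by (rule fBm_prod_int[OF F t t])
  have i2: "integrable M (\<lambda>\<omega>. B t \<omega> * B s \<omega>)" by (rule fBm_prod_int[OF F t s])
  have i3: "integrable M (\<lambda>\<omega>. B s \<omega> * B s \<omega>)" by (rule fBm_prod_int[OF F s s])
  show "integrable M (\<lambda>\<omega>. (B t \<omega> - B s \<omega>)\<^sup>2)" unfolding eq
    using i1 i2 i3 by simp
  have "integral\<^sup>L M (\<lambda>\<omega>. (B t \<omega> - B s \<omega>)\<^sup>2) =
      integral\<^sup>L M (\<lambda>\<omega>. B t \<omega> * B t \<omega>) - 2 * integral\<^sup>L M (\<lambda>\<omega>. B t \<omega> * B s \<omega>) + integral\<^sup>L M (\<lambda>\<omega>. B s \<omega> * B s \<omega>)"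
    unfolding eq using i1 i2 i3 by (simp add: integrable_mult_right)
  also have "\<dots> = \<bar>t - s\<bar> powr (2*H)"
    using fBm_cov[OF F t t] fBm_cov[OF F t s] fBm_cov[OF F s s] by simp
  finally show "integral\<^sup>L M (\<lambda>\<omega>. (B t \<omega> - B s \<omega>)\<^sup>2) = \<bar>t - s\<bar> powr (2*H)" .
qed

lemma nn_sqrt_bound:
  assumes P: "prob_space M" and Yi: "integrable M Y" and Y0: "\<And>\<omega>. Y \<omega> \<ge> 0"
    and a: "a > 0" and EY: "integral\<^sup>L M Y \<le> a\<^sup>2"
  shows "(\<integral>\<^sup>+\<omega>. ennreal (sqrt (Y \<omega>)) \<partial>M) \<le> ennreal a"
proof -
  interpret prob_space M using P .
  have pw: "sqrt (Y \<omega>) \<le> (Y \<omega> / a + a) / 2" for \<omega>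
  proof -
    have "0 \<le> (sqrt (Y \<omega>) - a)\<^sup>2" by simp
    hence "2 * a * sqrt (Y \<omega>) \<le> Y \<omega> + a\<^sup>2" using Y0[of \<omega>] by (simp add: power2_eq_square algebra_simps)
    thus ?thesis using a by (simp add: field_simps power2_eq_square)
  qed
  have ii: "integrable M (\<lambda>\<omega>. (Y \<omega> / a + a) / 2)" using Yi by simp
  have "(\<integral>\<^sup>+\<omega>. ennreal (sqrt (Y \<omega>)) \<partial>M) \<le> (\<integral>\<^sup>+\<omega>. ennreal ((Y \<omega> / a + a) / 2) \<partial>M)"
    by (intro nn_integral_mono ennreal_leI pw)
  also have "\<dots> = ennreal (integral\<^sup>L M (\<lambda>\<omega>. (Y \<omega> / a + a) / 2))"
    by (rule nn_integral_eq_integral[OF ii]) (use Y0 a in auto)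
  also have "ennreal (integral\<^sup>L M (\<lambda>\<omega>. (Y \<omega> / a + a) / 2)) \<le> ennreal a"
  proof (rule ennreal_leI)
    have "integral\<^sup>L M (\<lambda>\<omega>. (Y \<omega> / a + a) / 2) = (integral\<^sup>L M Y / a + a) / 2"
      using Yi by (simp add: prob_space)
    moreover have "integral\<^sup>L M Y / a \<le> a" using EY a by (simp add: divide_le_eq power2_eq_square)
    ultimately show "integral\<^sup>L M (\<lambda>\<omega>. (Y \<omega> / a + a) / 2) \<le> a" by simp
  qed
  finally show ?thesis .
qed



lemma floor_double:
  fixes y :: real
  shows "\<lfloor>2*y\<rfloor> = 2*\<lfloor>y\<rfloor> \<or> \<lfloor>2*y\<rfloor> = 2*\<lfloor>y\<rfloor> + 1"
proof -
  have a: "2*\<lfloor>y\<rfloor> \<le> \<lfloor>2*y\<rfloor>" by (simp add: le_floor_iff)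
  have b: "\<lfloor>2*y\<rfloor> < 2*\<lfloor>y\<rfloor> + 2"
    by (simp add: floor_less_iff) linarith
  from a b show ?thesis by linarith
qed

lemma chain:
  fixes g :: "real \<Rightarrow> real" and a t :: real
  assumes gc: "continuous_on {a..a+1} g"
    and sD: "summable (\<lambda>k. sqrt (\<Sum>j<2^k. (g (a + (real j + 1)/2^k) - g (a + real j/2^k))\<^sup>2))"
    and t: "t \<in> {a..a+1}"
  shows "\<bar>g t - g a\<bar> \<le> (\<Sum>k. sqrt (\<Sum>j<2^k. (g (a + (real j + 1)/2^k) - g (a + real j/2^k))\<^sup>2))"
proof -
  define D where "D = (\<lambda>k::nat. sqrt (\<Sum>j<2^k. (g (a + (real j + 1)/2^k) - g (a + real j/2^k))\<^sup>2))"
  have D0: "D k \<ge> 0" for k by (simp add: D_def sum_nonneg)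
  have Dterm: "\<bar>g (a + (real j + 1)/2^k) - g (a + real j/2^k)\<bar> \<le> D k" if "j < 2^k" for j k
  proof -
    have "(g (a + (real j + 1)/2^k) - g (a + real j/2^k))\<^sup>2 \<le> (\<Sum>j<2^k. (g (a + (real j + 1)/2^k) - g (a + real j/2^k))\<^sup>2)"
      by (rule member_le_sum) (use that in auto)
    hence "sqrt ((g (a + (real j + 1)/2^k) - g (a + real j/2^k))\<^sup>2) \<le> D k"
      unfolding D_def by (rule real_sqrt_le_mono)
    thus ?thesis by simp
  qed
  define x where "x = t - a"
  have x: "0 \<le> x" "x \<le> 1" using t by (auto simp: x_def)
  define f where "f = (\<lambda>m::nat. \<lfloor>2^m * x\<rfloor>)"
  define tm where "tm = (\<lambda>m::nat. a + real_of_int (f m) / 2^m)"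
  have f0: "0 \<le> f m" for m using x by (simp add: f_def)
  have f1: "real_of_int (f m) \<le> 2^m * x" for m by (simp add: f_def)
  have f2: "2^m * x < real_of_int (f m) + 1" for m by (simp add: f_def)
  have fle: "real_of_int (f m) \<le> 2^m" for m
  proof -
    have "2^m * x \<le> 2^m" using x by (simp add: mult_left_le)
    thus ?thesis using f1[of m] by linarith
  qed
  have claim: "\<bar>g (tm m) - g a\<bar> \<le> (\<Sum>k<Suc m. D k)" for m
  proof (induction m)
    case 0
    have "f 0 = 0 \<or> f 0 = 1" using f0[of 0] fle[of 0] by simp arith
    thus ?case
    proof
      assume "f 0 = 0" thus ?thesis using D0[of 0] by (simp add: tm_def)
    next
      assume "f 0 = 1"
      moreover have "\<bar>g (a + (real 0 + 1)/2^0) - g (a + real 0/2^0)\<bar> \<le> D 0" by (rule Dterm) simp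
      ultimately show ?thesis by (simp add: tm_def)
    qed
  next
    case (Suc m)
    have fd: "f (Suc m) = 2 * f m \<or> f (Suc m) = 2 * f m + 1"
      using floor_double[of "2^m * x"] by (simp add: f_def mult.assoc)
    thus ?case
    proof
      assume h: "f (Suc m) = 2 * f m"
      have "tm (Suc m) = tm m" by (simp add: tm_def h)
      hence "\<bar>g (tm (Suc m)) - g a\<bar> \<le> (\<Sum>k<Suc m. D k)" using Suc.IH by simp
      also have "\<dots> \<le> (\<Sum>k<Suc (Suc m). D k)" using D0[of "Suc m"] by simp
      finally show ?thesis .
    next
      assume h: "f (Suc m) = 2 * f m + 1"
      define j where "j = nat (2 * f m)"
      have jr: "real j = 2 * real_of_int (f m)" using f0[of m] by (simp add: j_def)
      have "real j + 1 \<le> 2^Suc m" using fle[of "Suc m"] h jr by simp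
      hence "real (Suc j) \<le> real (2^Suc m)" by simp
      hence "Suc j \<le> 2^Suc m" by (simp only: of_nat_le_iff)
      hence jlt: "j < 2^Suc m" by simp
      have t1: "tm (Suc m) = a + (real j + 1)/2^Suc m" using h jr by (simp add: tm_def)
      have t0: "tm m = a + real j/2^Suc m" using jr by (simp add: tm_def)
      have "\<bar>g (tm (Suc m)) - g (tm m)\<bar> \<le> D (Suc m)" unfolding t1 t0 by (rule Dterm[OF jlt])
      hence "\<bar>g (tm (Suc m)) - g a\<bar> \<le> (\<Sum>k<Suc m. D k) + D (Suc m)" using Suc.IH by linarith
      thus ?thesis by simp
    qed
  qed
  have tmin: "tm m \<in> {a..a+1}" for m
    using f0[of m] fle[of m] by (simp add: tm_def divide_le_eq)
  have tmlim: "tm \<longlonglongrightarrow> t"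
  proof -
    have "(\<lambda>m. tm m - t) \<longlonglongrightarrow> 0"
    proof (rule Lim_null_comparison)
      show "(\<lambda>m. (1/2::real)^m) \<longlonglongrightarrow> 0" by (rule LIMSEQ_power_zero) simp
      show "\<forall>\<^sub>F m in sequentially. norm (tm m - t) \<le> (1/2)^m"
      proof (intro always_eventually allI)
        fix m
        have "0 \<le> 2^m * x - f m" "2^m * x - f m \<le> 1" using f1[of m] f2[of m] by auto
        moreover have e: "x - f m / 2^m = (2^m * x - f m) / 2^m" by (simp add: field_simps)
        ultimately have "0 \<le> x - f m / 2^m" "x - f m / 2^m \<le> 1/2^m"
          by (simp_all only: e) (simp_all add: divide_right_mono)
        thus "norm (tm m - t) \<le> (1/2)^m" by (simp add: tm_def x_def power_one_over)
      qed
    qed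
    thus ?thesis by (simp add: LIM_zero_iff)
  qed
  have glim: "(\<lambda>m. \<bar>g (tm m) - g a\<bar>) \<longlonglongrightarrow> \<bar>g t - g a\<bar>"
    by (intro tendsto_intros continuous_on_tendsto_compose[OF gc tmlim t] always_eventually allI tmin)
  have "\<bar>g t - g a\<bar> \<le> suminf D"
  proof (rule LIMSEQ_le_const2[OF glim])
    have "sum D {..<Suc m} \<le> suminf D" for m
      by (rule sum_le_suminf) (use sD D0 in \<open>auto simp: D_def\<close>)
    thus "\<exists>N. \<forall>n\<ge>N. \<bar>g (tm n) - g a\<bar> \<le> suminf D" using claim order_trans by blast
  qed
  thus ?thesis by (simp add: D_def)
qed



lemma powr_identity:
  fixes H :: real and k :: nat
  shows "2^k * (1/2^k) powr (2*H) = ((2 powr (1/2 - H))^k)\<^sup>2"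
proof -
  have a: "(2::real)^k = 2 powr (real k)" by (simp add: powr_realpow)
  have b: "(1/2^k::real) powr (2*H) = 2 powr (- (real k * (2*H)))"
  proof -
    have b0: "(1/2^k::real) = 2 powr (- real k)" by (simp add: powr_minus powr_realpow divide_inverse)
    show ?thesis by (simp add: b0 powr_powr)
  qed
  have c: "(2 powr (1/2 - H))^k = 2 powr (real k * (1/2 - H))" by (simp add: powr_power)
  have "2^k * (1/2^k::real) powr (2*H) = 2^k * 2 powr (- (real k * (2*H)))" by (simp only: b)
  also have "\<dots> = 2 powr (real k) * 2 powr (- (real k * (2*H)))" by (simp only: a)
  also have "\<dots> = 2 powr (real k + - (real k * (2*H)))" by (rule powr_add[symmetric])
  also have "real k + - (real k * (2*H)) = real k * (1/2 - H) + real k * (1/2 - H)" by (simp add: algebra_simps)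
  also have "(2::real) powr (real k * (1/2 - H) + real k * (1/2 - H)) = (2 powr (real k * (1/2 - H)))\<^sup>2"
    by (simp only: powr_add power2_eq_square)
  also have "\<dots> = ((2 powr (1/2 - H))^k)\<^sup>2" by (simp only: c)
  finally show ?thesis .
qed

lemma D_bound:
  assumes F: "fBm M H B"
  shows "(\<integral>\<^sup>+\<omega>. ennreal (sqrt (\<Sum>j<2^k. (B (real n + (real j + 1)/2^k) \<omega> - B (real n + real j/2^k) \<omega>)\<^sup>2)) \<partial>M)
           \<le> ennreal ((2 powr (1/2 - H))^k)"
proof (rule nn_sqrt_bound[OF fBm_prob[OF F]])
  have nn: "real n + (real j + 1)/2^k \<ge> 0" "real n + real j/2^k \<ge> 0" for j by auto
  show "integrable M (\<lambda>\<omega>. \<Sum>j<2^k. (B (real n + (real j + 1)/2^k) \<omega> - B (real n + real j/2^k) \<omega>)\<^sup>2)"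
    by (intro Bochner_Integration.integrable_sum fBm_incr(1)[OF F] nn)
  show "0 \<le> (\<Sum>j<2^k. (B (real n + (real j + 1)/2^k) \<omega> - B (real n + real j/2^k) \<omega>)\<^sup>2)" for \<omega>
    by (simp add: sum_nonneg)
  show "0 < (2 powr (1/2 - H))^k" by simp
  have "integral\<^sup>L M (\<lambda>\<omega>. \<Sum>j<2^k. (B (real n + (real j + 1)/2^k) \<omega> - B (real n + real j/2^k) \<omega>)\<^sup>2)
      = (\<Sum>j<(2::nat)^k. integral\<^sup>L M (\<lambda>\<omega>. (B (real n + (real j + 1)/2^k) \<omega> - B (real n + real j/2^k) \<omega>)\<^sup>2))"
    by (rule Bochner_Integration.integral_sum) (intro fBm_incr(1)[OF F] nn)
  also have "\<dots> = (\<Sum>j<(2::nat)^k. (1/2^k) powr (2*H))"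
  proof (rule sum.cong[OF refl])
    fix j
    have "\<bar>(real n + (real j + 1)/2^k) - (real n + real j/2^k)\<bar> = 1/2^k"
      by (simp add: add_divide_distrib)
    thus "integral\<^sup>L M (\<lambda>\<omega>. (B (real n + (real j + 1)/2^k) \<omega> - B (real n + real j/2^k) \<omega>)\<^sup>2) = (1/2^k) powr (2*H)"
      using fBm_incr(2)[OF F nn(1)[of j] nn(2)[of j]] by simp
  qed
  also have "\<dots> = 2^k * (1/2^k) powr (2*H)" by simp
  also have "\<dots> = ((2 powr (1/2 - H))^k)\<^sup>2" by (rule powr_identity)
  finally show "integral\<^sup>L M (\<lambda>\<omega>. \<Sum>j<2^k. (B (real n + (real j + 1)/2^k) \<omega> - B (real n + real j/2^k) \<omega>)\<^sup>2)
      \<le> ((2 powr (1/2 - H))^k)\<^sup>2" by simp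
qed

lemma Bn_bound:
  assumes F: "fBm M H B" and H0: "0 < H" and H1: "H < 1"
  shows "(\<integral>\<^sup>+\<omega>. ennreal \<bar>B (real n) \<omega>\<bar> \<partial>M) \<le> ennreal (real n + 1)"
proof -
  have "(\<integral>\<^sup>+\<omega>. ennreal (sqrt ((B (real n) \<omega>)\<^sup>2)) \<partial>M) \<le> ennreal (real n + 1)"
  proof (rule nn_sqrt_bound[OF fBm_prob[OF F] fBm_sq_int[OF F]])
    show "0 \<le> real n" by simp
    show "0 \<le> (B (real n) \<omega>)\<^sup>2" for \<omega> by simp
    show "0 < real n + 1" by simp
    have "integral\<^sup>L M (\<lambda>\<omega>. (B (real n) \<omega>)\<^sup>2) = integral\<^sup>L M (\<lambda>\<omega>. B (real n) \<omega> * B (real n) \<omega>)"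
      by (simp add: power2_eq_square)
    also have "\<dots> = real n powr (2*H)" using fBm_cov[OF F, of "real n" "real n"] by simp
    also have "\<dots> \<le> (real n + 1)\<^sup>2"
    proof (cases "n = 0")
      case True thus ?thesis by simp
    next
      case False
      hence "real n \<ge> 1" by simp
      hence "real n powr (2*H) \<le> real n powr 2" using H1 by (intro powr_mono) auto
      also have "\<dots> = (real n)\<^sup>2" by (simp add: powr_realpow[symmetric])
      also have "\<dots> \<le> (real n + 1)\<^sup>2" by (intro power_mono) auto
      finally show ?thesis .
    qed
    finally show "integral\<^sup>L M (\<lambda>\<omega>. (B (real n) \<omega>)\<^sup>2) \<le> (real n + 1)\<^sup>2" .
  qed
  thus ?thesis by simp
qed

lemma summable_aux:
  fixes \<theta> :: real assumes \<theta>: "\<theta> > 0"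
  shows "summable (\<lambda>n. exp (-\<theta>/2)^n * (real n + 1))"
proof -
  define m where "m = min 1 (\<theta>/4)"
  have m: "m > 0" "m \<le> 1" "m \<le> \<theta>/4" using \<theta> by (auto simp: m_def)
  show ?thesis
  proof (rule summable_comparison_test')
    show "summable (\<lambda>n. (1/m) * exp (-\<theta>/4)^n)"
      by (intro summable_mult summable_geometric) (use \<theta> in simp)
    fix n :: nat
    have "m * (real n + 1) \<le> 1 + \<theta>/4 * real n"
    proof -
      have "m * real n \<le> \<theta>/4 * real n" using m by (intro mult_right_mono) auto
      thus ?thesis using m by (simp add: algebra_simps)
    qed
    also have "\<dots> \<le> exp (real n * (\<theta>/4))" using exp_ge_add_one_self[of "real n * (\<theta>/4)"] by (simp add: algebra_simps)
    finally have n1: "real n + 1 \<le> exp (real n * (\<theta>/4)) / m" using m by (simp add: field_simps)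
    have "exp (-\<theta>/2)^n * (real n + 1) \<le> exp (-\<theta>/2)^n * (exp (real n * (\<theta>/4)) / m)"
      using n1 by (intro mult_left_mono) auto
    also have "exp (-\<theta>/2)^n * exp (real n * (\<theta>/4)) = exp (-\<theta>/4)^n"
      by (simp add: exp_of_nat_mult[symmetric] exp_add[symmetric] algebra_simps)
    hence "exp (-\<theta>/2)^n * (exp (real n * (\<theta>/4)) / m) = (1/m) * exp (-\<theta>/4)^n" by simp
    finally show "norm (exp (-\<theta>/2)^n * (real n + 1)) \<le> (1/m) * exp (-\<theta>/4)^n" by simp
  qed
qed



lemma prob_growth:
  assumes H0: "1/2 < H" and H1: "H < 1" and \<theta>: "\<theta> > 0" and F: "fBm M H B"
    and cont: "AE \<omega> in M. continuous_on {0..} (\<lambda>t. B t \<omega>)"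
  shows "AE \<omega> in M. \<exists>C. \<forall>s\<ge>0. \<bar>B s \<omega>\<bar> \<le> C * exp (\<theta> * s / 2)"
proof -
  interpret prob_space M using fBm_prob[OF F] .
  have Bm: "B t \<in> borel_measurable M" if "t \<ge> 0" for t using fBm_meas[OF F that] .
  define q where "q = exp (-\<theta>/2)"
  have q: "0 < q" "q < 1" using \<theta> by (auto simp: q_def)
  define r where "r = (2::real) powr (1/2 - H)"
  have r: "0 < r" "r < 1"
  proof -
    show "0 < r" by (simp add: r_def)
    have "(2::real) powr (1/2 - H) < 2 powr 0" using H0 by (intro powr_less_mono) auto
    thus "r < 1" by (simp add: r_def)
  qed
  define D where "D = (\<lambda>(n::nat) (k::nat) \<omega>. sqrt (\<Sum>j<2^k. (B (real n + (real j + 1)/2^k) \<omega> - B (real n + real j/2^k) \<omega>)\<^sup>2))"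
  define T where "T = (\<lambda>\<omega>. (\<Sum>n. ennreal (q^n * \<bar>B (real n) \<omega>\<bar>) + (\<Sum>k. ennreal (q^n * D n k \<omega>))))"
  have Im[measurable]: "(\<lambda>\<omega>. B (real n + (real j + 1)/2^k) \<omega> - B (real n + real j/2^k) \<omega>) \<in> borel_measurable M" for n k j
    by (intro borel_measurable_diff Bm) auto
  have Dm[measurable]: "D n k \<in> borel_measurable M" for n k
    unfolding D_def by measurable
  have Bnm[measurable]: "B (real n) \<in> borel_measurable M" for n using Bm by simp
  have D0: "D n k \<omega> \<ge> 0" for n k \<omega> by (simp add: D_def sum_nonneg)
  have e1: "(\<integral>\<^sup>+\<omega>. ennreal (q^n * \<bar>B (real n) \<omega>\<bar>) \<partial>M) \<le> ennreal (q^n * (real n + 1))" for n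
  proof -
    have "(\<integral>\<^sup>+\<omega>. ennreal (q^n * \<bar>B (real n) \<omega>\<bar>) \<partial>M) = (\<integral>\<^sup>+\<omega>. ennreal (q^n) * ennreal \<bar>B (real n) \<omega>\<bar> \<partial>M)"
      using q by (simp add: ennreal_mult)
    also have "\<dots> = ennreal (q^n) * (\<integral>\<^sup>+\<omega>. ennreal \<bar>B (real n) \<omega>\<bar> \<partial>M)"
      by (rule nn_integral_cmult) measurable
    also have "\<dots> \<le> ennreal (q^n) * ennreal (real n + 1)"
      by (intro mult_left_mono Bn_bound[OF F]) (use H0 H1 in auto)
    also have "\<dots> = ennreal (q^n * (real n + 1))" using q by (simp add: ennreal_mult)
    finally show ?thesis .
  qed
  have e2: "(\<integral>\<^sup>+\<omega>. ennreal (q^n * D n k \<omega>) \<partial>M) \<le> ennreal (q^n * r^k)" for n k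
  proof -
    have "(\<integral>\<^sup>+\<omega>. ennreal (q^n * D n k \<omega>) \<partial>M) = (\<integral>\<^sup>+\<omega>. ennreal (q^n) * ennreal (D n k \<omega>) \<partial>M)"
      using q D0 by (simp add: ennreal_mult)
    also have "\<dots> = ennreal (q^n) * (\<integral>\<^sup>+\<omega>. ennreal (D n k \<omega>) \<partial>M)"
      by (rule nn_integral_cmult) measurable
    also have "\<dots> \<le> ennreal (q^n) * ennreal (r^k)"
      by (intro mult_left_mono) (use D_bound[OF F, of n k] in \<open>simp_all add: D_def r_def\<close>)
    also have "\<dots> = ennreal (q^n * r^k)" using q r by (simp add: ennreal_mult)
    finally show ?thesis .
  qed
  have intT: "(\<integral>\<^sup>+\<omega>. T \<omega> \<partial>M) \<le> (\<Sum>n. ennreal (q^n * (real n + 1)) + (\<Sum>k. ennreal (q^n * r^k)))"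
  proof -
    have "(\<integral>\<^sup>+\<omega>. T \<omega> \<partial>M) = (\<Sum>n. \<integral>\<^sup>+\<omega>. ennreal (q^n * \<bar>B (real n) \<omega>\<bar>) + (\<Sum>k. ennreal (q^n * D n k \<omega>)) \<partial>M)"
      unfolding T_def by (rule nn_integral_suminf) measurable
    also have "\<dots> \<le> (\<Sum>n. ennreal (q^n * (real n + 1)) + (\<Sum>k. ennreal (q^n * r^k)))"
    proof (rule suminf_le[OF _ summableI summableI])
      fix n
      have "(\<integral>\<^sup>+\<omega>. ennreal (q^n * \<bar>B (real n) \<omega>\<bar>) + (\<Sum>k. ennreal (q^n * D n k \<omega>)) \<partial>M)
          = (\<integral>\<^sup>+\<omega>. ennreal (q^n * \<bar>B (real n) \<omega>\<bar>) \<partial>M) + (\<integral>\<^sup>+\<omega>. (\<Sum>k. ennreal (q^n * D n k \<omega>)) \<partial>M)"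
        by (rule nn_integral_add) measurable
      also have "(\<integral>\<^sup>+\<omega>. (\<Sum>k. ennreal (q^n * D n k \<omega>)) \<partial>M) = (\<Sum>k. \<integral>\<^sup>+\<omega>. ennreal (q^n * D n k \<omega>) \<partial>M)"
        by (rule nn_integral_suminf) measurable
      also have "(\<integral>\<^sup>+\<omega>. ennreal (q^n * \<bar>B (real n) \<omega>\<bar>) \<partial>M) + (\<Sum>k. \<integral>\<^sup>+\<omega>. ennreal (q^n * D n k \<omega>) \<partial>M)
          \<le> ennreal (q^n * (real n + 1)) + (\<Sum>k. ennreal (q^n * r^k))"
        by (intro add_mono e1 suminf_le[OF _ summableI summableI] e2)
      finally show "(\<integral>\<^sup>+\<omega>. ennreal (q^n * \<bar>B (real n) \<omega>\<bar>) + (\<Sum>k. ennreal (q^n * D n k \<omega>)) \<partial>M)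
          \<le> ennreal (q^n * (real n + 1)) + (\<Sum>k. ennreal (q^n * r^k))" .
    qed
    finally show ?thesis .
  qed
  have fin: "(\<Sum>n. ennreal (q^n * (real n + 1)) + (\<Sum>k. ennreal (q^n * r^k))) \<noteq> \<top>"
  proof -
    have inner: "(\<Sum>k. ennreal (q^n * r^k)) = ennreal (q^n / (1 - r))" for n
    proof -
      have s: "summable (\<lambda>k. q^n * r^k)" by (intro summable_mult summable_geometric) (use r in simp)
      have "(\<Sum>k. ennreal (q^n * r^k)) = ennreal (\<Sum>k. q^n * r^k)"
        by (rule suminf_ennreal2[OF _ s]) (use q r in simp)
      also have "(\<Sum>k. q^n * r^k) = q^n / (1 - r)"
        using suminf_mult[OF summable_geometric, of r "q^n"] suminf_geometric[of r] r by simp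
      finally show ?thesis .
    qed
    have "(\<lambda>n. ennreal (q^n * (real n + 1)) + (\<Sum>k. ennreal (q^n * r^k)))
        = (\<lambda>n. ennreal (q^n * (real n + 1) + q^n / (1 - r)))"
    proof
      fix n
      have "0 \<le> q^n * (real n + 1)" "0 \<le> q^n / (1 - r)" using q r by simp_all
      thus "ennreal (q^n * (real n + 1)) + (\<Sum>k. ennreal (q^n * r^k)) = ennreal (q^n * (real n + 1) + q^n / (1 - r))"
        by (simp only: inner ennreal_plus)
    qed
    moreover have sm: "summable (\<lambda>n. q^n * (real n + 1) + q^n / (1 - r))"
    proof (rule summable_add)
      show "summable (\<lambda>n. q^n * (real n + 1))" using summable_aux[OF \<theta>] by (simp add: q_def)
      show "summable (\<lambda>n. q^n / (1 - r))" by (intro summable_divide summable_geometric) (use q in simp)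
    qed
    moreover have "0 \<le> q^n * (real n + 1) + q^n / (1 - r)" for n
    proof -
      have "0 \<le> q^n * (real n + 1)" "0 \<le> q^n / (1 - r)" using q r by simp_all
      thus ?thesis by linarith
    qed
    hence "(\<Sum>n. ennreal (q^n * (real n + 1) + q^n / (1 - r))) \<noteq> \<top>"
      by (intro ennreal_suminf_neq_top[OF sm])
    ultimately show ?thesis by simp
  qed
  have Tm[measurable]: "T \<in> borel_measurable M" unfolding T_def by measurable
  have "(\<integral>\<^sup>+\<omega>. T \<omega> \<partial>M) \<noteq> \<top>"
  proof
    assume "(\<integral>\<^sup>+\<omega>. T \<omega> \<partial>M) = \<top>"
    hence "(\<Sum>n. ennreal (q^n * (real n + 1)) + (\<Sum>k. ennreal (q^n * r^k))) = \<top>" using intT by (simp add: top_unique)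
    with fin show False ..
  qed
  hence AT: "AE \<omega> in M. T \<omega> \<noteq> \<top>" using nn_integral_PInf_AE[OF Tm] by simp
  show ?thesis using AT cont
  proof eventually_elim
    fix \<omega> assume Tf: "T \<omega> \<noteq> \<top>" and c: "continuous_on {0..} (\<lambda>t. B t \<omega>)"
    define R where "R = enn2real (T \<omega>)"
    have R: "T \<omega> = ennreal R" "R \<ge> 0" using Tf by (auto simp: R_def less_top)
    define f where "f = (\<lambda>n. ennreal (q^n * \<bar>B (real n) \<omega>\<bar>) + (\<Sum>k. ennreal (q^n * D n k \<omega>)))"
    have fT: "f n \<le> T \<omega>" for n
    proof -
      have "sum f {n} \<le> suminf f" by (rule sum_le_suminf) auto
      thus ?thesis by (simp add: T_def f_def)
    qed
    have bnd: "\<bar>B s \<omega>\<bar> \<le> 2 * R / q^n" if s: "real n \<le> s" "s \<le> real n + 1" for n s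
    proof -
      have "ennreal (q^n * \<bar>B (real n) \<omega>\<bar>) \<le> f n" unfolding f_def by (intro add_increasing2) auto
      hence a1: "ennreal (q^n * \<bar>B (real n) \<omega>\<bar>) \<le> ennreal R" using fT[of n] R(1) by simp
      have "(\<Sum>k. ennreal (q^n * D n k \<omega>)) \<le> f n" unfolding f_def by (intro add_increasing) auto
      hence a2: "(\<Sum>k. ennreal (q^n * D n k \<omega>)) \<le> ennreal R" using fT[of n] R(1) by simp
      have sm: "summable (\<lambda>k. q^n * D n k \<omega>)"
      proof (rule summable_suminf_not_top)
        show "0 \<le> q^n * D n k \<omega>" for k using q D0[of n k \<omega>] by simp
        show "(\<Sum>k. ennreal (q^n * D n k \<omega>)) \<noteq> \<top>" by (rule neq_top_trans[OF ennreal_neq_top a2])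
      qed
      have qn0: "0 \<le> q^n" using q by simp
      have eqs: "(\<Sum>k. ennreal (q^n * D n k \<omega>)) = ennreal (\<Sum>k. q^n * D n k \<omega>)"
        by (rule suminf_ennreal2[OF _ sm]) (intro mult_nonneg_nonneg qn0 D0)
      have "ennreal (\<Sum>k. q^n * D n k \<omega>) \<le> ennreal R"
        using a2 unfolding eqs .
      hence b2: "(\<Sum>k. q^n * D n k \<omega>) \<le> R" using ennreal_le_iff[OF R(2)] by blast
      have b1: "q^n * \<bar>B (real n) \<omega>\<bar> \<le> R" using a1 ennreal_le_iff[OF R(2)] by blast
      have smD: "summable (\<lambda>k. D n k \<omega>)"
        using summable_mult[OF sm, of "1/q^n"] q by simp
      have "(\<Sum>k. q^n * D n k \<omega>) = q^n * (\<Sum>k. D n k \<omega>)" by (rule suminf_mult[OF smD])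
      hence b3: "q^n * (\<Sum>k. D n k \<omega>) \<le> R" using b2 by simp
      have gc: "continuous_on {real n..real n + 1} (\<lambda>t. B t \<omega>)" by (rule continuous_on_subset[OF c]) auto
      have ch: "\<bar>B s \<omega> - B (real n) \<omega>\<bar> \<le> (\<Sum>k. D n k \<omega>)"
        using chain[OF gc _ , of s] smD s unfolding D_def by simp
      have "\<bar>B s \<omega>\<bar> \<le> \<bar>B (real n) \<omega>\<bar> + \<bar>B s \<omega> - B (real n) \<omega>\<bar>" by arith
      hence "q^n * \<bar>B s \<omega>\<bar> \<le> q^n * (\<bar>B (real n) \<omega>\<bar> + \<bar>B s \<omega> - B (real n) \<omega>\<bar>)"
        using q by (intro mult_left_mono) auto
      hence "q^n * \<bar>B s \<omega>\<bar> \<le> q^n * \<bar>B (real n) \<omega>\<bar> + q^n * \<bar>B s \<omega> - B (real n) \<omega>\<bar>"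
        by (simp add: distrib_left)
      also have "\<dots> \<le> R + q^n * (\<Sum>k. D n k \<omega>)" using b1 ch q by (intro add_mono mult_left_mono) auto
      also have "\<dots> \<le> 2 * R" using b3 by simp
      finally show ?thesis using q by (simp add: field_simps)
    qed
    show "\<exists>C. \<forall>s\<ge>0. \<bar>B s \<omega>\<bar> \<le> C * exp (\<theta> * s / 2)"
    proof (intro exI allI impI)
      fix s :: real assume s: "s \<ge> 0"
      define n where "n = nat \<lfloor>s\<rfloor>"
      have ns: "real n \<le> s" "s \<le> real n + 1" using s by (auto simp: n_def)
      have "\<bar>B s \<omega>\<bar> \<le> 2 * R / q^n" by (rule bnd[OF ns])
      also have "2 * R / q^n = 2 * R * exp (\<theta> * real n / 2)"
      proof -
        have qn: "q^n = exp (real n * (-\<theta>/2))" by (simp only: q_def exp_of_nat_mult)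
        have e: "q^n * exp (\<theta> * real n / 2) = 1" unfolding qn by (simp add: exp_add[symmetric])
        have "exp (\<theta> * real n / 2) = 1 / q^n" using e q by (simp add: eq_divide_eq mult.commute)
        thus ?thesis by simp
      qed
      also have "\<dots> \<le> 2 * R * exp (\<theta> * s / 2)" using R ns \<theta> by (intro mult_left_mono) auto
      finally show "\<bar>B s \<omega>\<bar> \<le> 2 * R * exp (\<theta> * s / 2)" .
    qed
  qed
qed


theorem mainTheorem3:
  fixes M :: "'a measure" and B :: "real \<Rightarrow> 'a \<Rightarrow> real" and H \<theta> :: real
  assumes "1/2 < H" and "H < 1" and "\<theta> > 0"
    and "fBm M H B"
    and "AE \<omega> in M. continuous_on {0..} (\<lambda>t. B t \<omega>)"
  shows "AE \<omega> in M. \<exists>L::real.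
           ((\<lambda>t. xi \<theta> B t \<omega>) \<longlongrightarrow> L) at_top \<and>
           ((\<lambda>t. exp (- 2 * \<theta> * t) * (LBINT s=0..t. (exp (\<theta> * s) * xi \<theta> B s \<omega>)\<^sup>2))
              \<longlongrightarrow> L\<^sup>2 / (2 * \<theta>)) at_top"
proof -
  have AG: "AE \<omega> in M. \<exists>C. \<forall>s\<ge>0. \<bar>B s \<omega>\<bar> \<le> C * exp (\<theta> * s / 2)"
    by (rule prob_growth) (use assms in auto)
  have A0: "AE \<omega> in M. B 0 \<omega> = 0" using assms(4) unfolding fBm_def by blast
  show ?thesis using AG A0 assms(5)
  proof eventually_elim
    fix \<omega> assume G: "\<exists>C. \<forall>s\<ge>0. \<bar>B s \<omega>\<bar> \<le> C * exp (\<theta> * s / 2)" and b0: "B 0 \<omega> = 0"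
      and c: "continuous_on {0..} (\<lambda>t. B t \<omega>)"
    obtain C where C: "\<And>s. s \<ge> 0 \<Longrightarrow> \<bar>B s \<omega>\<bar> \<le> C * exp (\<theta> * s / 2)" using G by blast
    show "\<exists>L::real.
           ((\<lambda>t. xi \<theta> B t \<omega>) \<longlongrightarrow> L) at_top \<and>
           ((\<lambda>t. exp (- 2 * \<theta> * t) * (LBINT s=0..t. (exp (\<theta> * s) * xi \<theta> B s \<omega>)\<^sup>2))
              \<longlongrightarrow> L\<^sup>2 / (2 * \<theta>)) at_top"
    proof (rule det_main[OF assms(3) c C])
      fix t :: real assume t: "t \<ge> 0"
      have ct: "continuous_on {0..t} (\<lambda>s. B s \<omega>)" by (rule continuous_on_subset[OF c]) auto
      show "xi \<theta> B t \<omega> = exp (-\<theta>*t) * B t \<omega> - integral {0..t} (\<lambda>s. B s \<omega> * (- \<theta> * exp (- \<theta> * s)))"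
        using xi_eq[of \<theta> t B \<omega>, OF assms(3) t ct] b0 by simp
    qed
  qed
qed

end
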